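(* Let $n$ be a natural number which is not a perfect square and such that $v_2(n)\ge0$ is even (in particular $n$ may be odd). Then $D_{S(n)^*}=C_{S(n)^*}=3$.
   Context: For a natural number $n$, $\mathbb Z_n=\mathbb Z/n\mathbb Z$, $S(n)=\{x^2:x\in\mathbb Z_n\}$, $S(n)^*=S(n)\setminus\{0\}$. For $A\subseteq\mathbb Z_n$, a sequence $(y_1,\dots,y_t)$ ($t\ge1$) in $\mathbb Z_n$ is an $A$-weighted zero-sum sequence if there exist $a_1,\dots,a_t\in A$ with $\sum a_iy_i=0$; a sequence has an $A$-weighted zero-sum subsequence if some nonempty subsequence is an $A$-weighted zero-sum sequence. $D_A(n)$ is the least positive integer $t$ such that every sequence of length $t$ in $\mathbb Z_n$ has an $A$-weighted zero-sum subsequence; $C_A(n)$ is the least positive integer $t$ such that every sequence of length $t$ in $\mathbb Z_n$ has an $A$-weighted zero-sum subsequence consisting of consecutive terms. $D_{S(n)^*}=D_{S(n)^*}(n)$, $C_{S(n)^*}=C_{S(n)^*}(n)$. $v_2(n)$ is the exponent of $2$ in $n$. *)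

theory Defs
  imports Main "HOL-Library.Sublist" "HOL-Computational_Algebra.Primes"
begin

text \<open>Elements of Z_n are represented by integers in {0..<n}; equality in Z_n is congruence mod n.\<close>

definition sq_set :: "nat \<Rightarrow> int set" where
  "sq_set n = {(x ^ 2) mod int n | x. x \<in> {0..<int n}}"

definition sq_set_star :: "nat \<Rightarrow> int set" where
  "sq_set_star n = sq_set n - {0}"

definition weighted_zero_sum :: "nat \<Rightarrow> int set \<Rightarrow> int list \<Rightarrow> bool" where
  "weighted_zero_sum n A ys \<longleftrightarrow> ys \<noteq> [] \<and>
     (\<exists>as. length as = length ys \<and> set as \<subseteq> A \<and>
        (\<Sum>i<length ys. as ! i * ys ! i) mod int n = 0)"

definition has_wzs_subseq :: "nat \<Rightarrow> int set \<Rightarrow> int list \<Rightarrow> bool" where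
  "has_wzs_subseq n A ys \<longleftrightarrow> (\<exists>zs. subseq zs ys \<and> zs \<noteq> [] \<and> weighted_zero_sum n A zs)"

definition has_wzs_consec :: "nat \<Rightarrow> int set \<Rightarrow> int list \<Rightarrow> bool" where
  "has_wzs_consec n A ys \<longleftrightarrow> (\<exists>zs. sublist zs ys \<and> zs \<noteq> [] \<and> weighted_zero_sum n A zs)"

definition D_const :: "int set \<Rightarrow> nat \<Rightarrow> nat" where
  "D_const A n = (LEAST t. t > 0 \<and> (\<forall>ys. length ys = t \<and> set ys \<subseteq> {0..<int n} \<longrightarrow> has_wzs_subseq n A ys))"

definition C_const :: "int set \<Rightarrow> nat \<Rightarrow> nat" where
  "C_const A n = (LEAST t. t > 0 \<and> (\<forall>ys. length ys = t \<and> set ys \<subseteq> {0..<int n} \<longrightarrow> has_wzs_consec n A ys))"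

end

theory Submission
  imports Defs "HOL-Number_Theory.Number_Theory" "HOL-Computational_Algebra.Nth_Powers"
begin


lemma leg_vals: "Legendre a p = 0 \<or> Legendre a p = 1 \<or> Legendre a p = -1"
  unfolding Legendre_def by auto

lemma leg_mult:
  assumes "prime (p::nat)" "2 < p"
  shows "Legendre (a*b) (int p) = Legendre a (int p) * Legendre b (int p)"
proof -
  have "[Legendre (a*b) (int p) = (a*b) ^ ((p - 1) div 2)] (mod (int p))"
    using euler_criterion[OF assms] by simp
  also have "(a*b) ^ ((p - 1) div 2) = a ^ ((p - 1) div 2) * b ^ ((p - 1) div 2)"
    by (simp add: power_mult_distrib)
  also have "[\<dots> = Legendre a (int p) * Legendre b (int p)] (mod (int p))"
    using euler_criterion[OF assms, of a] euler_criterion[OF assms, of b]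
    by (intro cong_mult) (auto simp: cong_sym)
  finally have c: "int p dvd Legendre (a*b) p - Legendre a p * Legendre b p"
    by (simp add: cong_iff_dvd_diff)
  have r: "Legendre (a*b) p - Legendre a p * Legendre b p \<in> {-2..2}"
    using leg_vals[of "a*b" p] leg_vals[of a p] leg_vals[of b p] by auto
  show ?thesis
  proof (rule ccontr)
    assume ne: "\<not> ?thesis"
    define d where "d = Legendre (a*b) p - Legendre a p * Legendre b p"
    have "d \<noteq> 0" using ne d_def by simp
    then have "\<bar>d\<bar> \<ge> int p" using c d_def dvd_imp_le_int[of d "int p"] by simp
    with r d_def assms(2) show False by auto
  qed
qed

lemma leg_cong: "[a = b] (mod p) \<Longrightarrow> Legendre a p = Legendre b p"
proof -
  assume h: "[a = b] (mod p)"
  have "QuadRes p a = QuadRes p b" unfolding QuadRes_def using h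
    by (meson cong_sym cong_trans)
  moreover have "[a = 0] (mod p) = [b = 0] (mod p)" using h
    by (meson cong_sym cong_trans)
  ultimately show ?thesis unfolding Legendre_def by simp
qed

lemma leg_nz: "prime (p::int) \<Longrightarrow> \<not> p dvd a \<Longrightarrow> Legendre a p = 1 \<or> Legendre a p = -1"
  unfolding Legendre_def by (auto simp: cong_0_iff)

lemma leg_one: "Legendre a p = 1 \<Longrightarrow> \<exists>y. p dvd y^2 - a"
  unfolding Legendre_def QuadRes_def by (auto simp: cong_iff_dvd_diff split: if_splits)

lemma leg_m1: "Legendre a p = -1 \<Longrightarrow> \<not> p dvd a"
  unfolding Legendre_def by (auto simp: cong_0_iff split: if_splits)


lemma nonres_exists:
  assumes "prime (p::nat)" "2 < p"
  shows "\<exists>a. \<not> QuadRes (int p) a"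
proof (rule ccontr)
  assume "\<not> ?thesis"
  then have all: "\<And>a. QuadRes (int p) a" by auto
  define h where "h = (p - 1) div 2"
  have p2: "p = 2*h + 1" using prime_odd_nat[OF assms] h_def by presburger
  have h1: "h \<ge> 1" using p2 assms(2) by simp
  define f where "f = (\<lambda>x::int. x^2 mod int p)"
  have sub: "{1..int p - 1} \<subseteq> f ` {1..int h}"
  proof
    fix a assume a: "a \<in> {1..int p - 1}"
    obtain y where y: "[y^2 = a] (mod int p)" using all[of a] unfolding QuadRes_def by auto
    define r where "r = y mod int p"
    have r0: "0 \<le> r" "r < int p" using r_def assms by auto
    have "[r = y] (mod int p)" unfolding r_def by (simp add: cong_def)
    then have ra: "[r^2 = a] (mod int p)" using y by (meson cong_pow cong_trans)
    have amod: "a mod int p = a" using a by auto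
    have "r \<noteq> 0"
    proof
      assume "r = 0"
      then have "int p dvd a" using ra by simp (metis cong_0_iff cong_sym)
      then show False using a by (auto dest: zdvd_imp_le)
    qed
    show "a \<in> f ` {1..int h}"
    proof (cases "r \<le> int h")
      case True
      have "f r = a" unfolding f_def using ra amod by (simp add: cong_def)
      then show ?thesis using True \<open>r \<noteq> 0\<close> r0 by force
    next
      case False
      define r' where "r' = int p - r"
      have "r'^2 = r^2 + int p * (int p - 2*r)" unfolding r'_def by (simp add: power2_eq_square algebra_simps)
      then have "[r'^2 = r^2] (mod int p)" by (simp add: cong_def)
      then have "f r' = a" unfolding f_def using ra amod by (simp add: cong_def)
      moreover have "r' \<in> {1..int h}" using False r0 p2 unfolding r'_def by auto
      ultimately show ?thesis by force
    qed
  qed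
  have "card {1..int p - 1} \<le> card (f ` {1..int h})" by (rule card_mono[OF _ sub]) simp
  also have "\<dots> \<le> card {1..int h}" by (rule card_image_le) simp
  finally show False using p2 h1 by simp
qed

lemma qr_cong: "[a = b] (mod m) \<Longrightarrow> QuadRes m a \<Longrightarrow> QuadRes m b"
  unfolding QuadRes_def by (meson cong_trans)

lemma qnr_s2:
  assumes "prime (p::nat)" "2 < p"
  shows "\<exists>s::int. \<not> int p dvd s \<and> Legendre (s^2+1) (int p) = -1"
proof -
  obtain a where a: "\<not> QuadRes (int p) a" using nonres_exists[OF assms] by auto
  have "\<exists>k::nat. QuadRes (int p) (int k) \<and> \<not> QuadRes (int p) (int k + 1)"
  proof (rule ccontr)
    assume "\<not> ?thesis"
    then have st: "\<And>k::nat. QuadRes (int p) (int k) \<Longrightarrow> QuadRes (int p) (int k + 1)" by auto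
    have allk: "QuadRes (int p) (int m)" for m
    proof (induction m)
      case 0 then show ?case unfolding QuadRes_def by (auto intro: exI[of _ 0])
    next
      case (Suc m) then show ?case using st[of m] by (simp add: add.commute)
    qed
    have "a mod int p = int (nat (a mod int p))" using assms by simp
    then have "QuadRes (int p) (a mod int p)" using allk by metis
    then have "QuadRes (int p) a" using qr_cong[of "a mod int p" a "int p"] by (simp add: cong_def)
    with a show False by simp
  qed
  then obtain k :: nat where k: "QuadRes (int p) (int k)" "\<not> QuadRes (int p) (int k + 1)" by auto
  obtain s where s: "[s^2 = int k] (mod int p)" using k(1) unfolding QuadRes_def by auto
  have nk1: "\<not> [int k + 1 = 0] (mod int p)"
  proof
    assume "[int k + 1 = 0] (mod int p)"
    then have "QuadRes (int p) (int k + 1)" unfolding QuadRes_def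
      by (intro exI[of _ 0]) (simp add: cong_sym)
    with k(2) show False by simp
  qed
  have ns: "\<not> int p dvd s"
  proof
    assume "int p dvd s"
    then have "[s^2 = 0] (mod int p)" by (simp add: cong_0_iff power2_eq_square)
    then have "[int k + 1 = 1] (mod int p)" using s
      by (metis add.commute add.right_neutral cong_add_lcancel_0 cong_sym cong_trans)
    then have "QuadRes (int p) (int k + 1)" unfolding QuadRes_def
      by (intro exI[of _ 1]) (simp add: cong_sym)
    with k(2) show False by simp
  qed
  have "[s^2 + 1 = int k + 1] (mod int p)" using s by (simp add: cong_add)
  then have "Legendre (s^2+1) (int p) = Legendre (int k + 1) (int p)" by (rule leg_cong)
  also have "\<dots> = -1" unfolding Legendre_def using nk1 k(2) by simp
  finally show ?thesis using ns by auto
qed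


lemma pair_lem:
  assumes "prime (p::nat)" "\<not> int p dvd y1" "\<not> int p dvd y2"
    and "Legendre (-(y1*y2)) (int p) = 1"
  shows "\<exists>v w. \<not> int p dvd v \<and> \<not> int p dvd w \<and> int p dvd (v^2*y1 + w^2*y2)"
proof -
  have pr: "prime (int p)" using assms(1) by simp
  obtain u where u: "int p dvd u^2 - (-(y1*y2))" using leg_one[OF assms(4)] by auto
  have e: "u^2*y1 + y1^2*y2 = y1 * (u^2 - (-(y1*y2)))" by (simp add: power2_eq_square algebra_simps)
  have d: "int p dvd u^2*y1 + y1^2*y2" unfolding e using u by simp
  have nu: "\<not> int p dvd u"
  proof
    assume "int p dvd u"
    then have "int p dvd u^2" by (simp add: power2_eq_square)
    then have "int p dvd y1*y2" using u by (metis diff_minus_eq_add dvd_add_right_iff)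
    then show False using pr assms(2,3) by (simp add: prime_dvd_mult_iff)
  qed
  show ?thesis using nu assms(2) d by blast
qed

lemma loc3:
  assumes "prime (p::nat)" "2 < p"
  shows "int p dvd y1 \<or> int p dvd y2 \<or> int p dvd y3 \<or>
    (\<exists>v w. \<not> int p dvd v \<and> \<not> int p dvd w \<and> int p dvd (v^2*y1 + w^2*y2)) \<or>
    (\<exists>v w. \<not> int p dvd v \<and> \<not> int p dvd w \<and> int p dvd (v^2*y2 + w^2*y3)) \<or>
    (\<exists>u v w. \<not> int p dvd u \<and> \<not> int p dvd v \<and> \<not> int p dvd w \<and>
        int p dvd (u^2*y1 + v^2*y2 + w^2*y3))"
proof -
  define P where "P = int p"
  have pr: "prime P" using assms(1) P_def by simp
  {
    assume n1: "\<not> P dvd y1" and n2: "\<not> P dvd y2" and n3: "\<not> P dvd y3"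
      and c1: "Legendre (-(y1*y2)) P \<noteq> 1" and c2: "Legendre (-(y2*y3)) P \<noteq> 1"
    have L1: "Legendre (-(y1*y2)) P = -1" using leg_nz[OF pr, of "-(y1*y2)"] c1 n1 n2 pr
      by (auto simp: prime_dvd_mult_iff)
    have L2: "Legendre (-(y2*y3)) P = -1" using leg_nz[OF pr, of "-(y2*y3)"] c2 n2 n3 pr
      by (auto simp: prime_dvd_mult_iff)
    have Ly2: "Legendre y2 P * Legendre y2 P = 1" using leg_nz[OF pr n2] by auto
    have A1: "Legendre ((-(y1*y2))*(-(y2*y3))) P = 1"
      using leg_mult[OF assms, of "-(y1*y2)" "-(y2*y3)"] L1 L2 P_def by simp
    have eq: "(-(y1*y2))*(-(y2*y3)) = (y1*y3)*(y2*y2)" by (simp add: algebra_simps)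
    have A2: "Legendre ((y1*y3)*(y2*y2)) P = Legendre (y1*y3) P"
      using leg_mult[OF assms, of "y1*y3" "y2*y2"] leg_mult[OF assms, of y2 y2] Ly2 P_def by simp
    from A1 have "Legendre ((y1*y3)*(y2*y2)) P = 1" unfolding eq .
    then have L13: "Legendre (y1*y3) P = 1" using A2 by simp
    obtain t where t: "P dvd t^2 - y1*y3" using leg_one[OF L13] by auto
    obtain s where s: "\<not> P dvd s" "Legendre (s^2+1) P = -1" using qnr_s2[OF assms] P_def by auto
    define B where "B = s^2 + 1"
    define g where "g = -(y1*y2)"
    have LBg: "Legendre (B*g) P = 1"
      using leg_mult[OF assms, of B g] s(2) L1 P_def B_def g_def by simp
    obtain h where h: "P dvd h^2 - B*g" using leg_one[OF LBg] by auto
    have nB: "\<not> P dvd B" using leg_m1 s(2) B_def by simp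
    have ng: "\<not> P dvd g" using n1 n2 pr g_def by (simp add: prime_dvd_mult_iff)
    have nt: "\<not> P dvd t"
    proof
      assume "P dvd t"
      then have "P dvd t^2" by (simp add: power2_eq_square)
      then have "P dvd t^2 - (t^2 - y1*y3)" using t by (rule dvd_diff)
      then have "P dvd y1*y3" by simp
      then show False using pr n1 n3 by (simp add: prime_dvd_mult_iff)
    qed
    have nh: "\<not> P dvd h"
    proof
      assume "P dvd h"
      then have "P dvd h^2" by (simp add: power2_eq_square)
      then have "P dvd h^2 - (h^2 - B*g)" using h by (rule dvd_diff)
      then have "P dvd B*g" by simp
      then show False using pr nB ng by (simp add: prime_dvd_mult_iff)
    qed
    obtain T where T: "t^2 - y1*y3 = P*T" using t by (auto simp: dvd_def)
    obtain H where H: "h^2 - B*g = P*H" using h by (auto simp: dvd_def)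
    have t2: "t^2 = y1*y3 + P*T" using T by simp
    have h2: "h^2 = B*g + P*H" using H by simp
    have "(s*h*t)^2*y1 + (B*y1*t)^2*y2 + (h*y1)^2*y3
        = t^2 * (s^2*h^2*y1 + B^2*y1^2*y2) + h^2*y1^2*y3"
      by (simp add: power_mult_distrib algebra_simps)
    also have "\<dots> = P*(T*(s^2*h^2*y1 + B^2*y1^2*y2)) + y1^2*y3*(s^2*h^2 + h^2 + B^2*y1*y2)"
      unfolding t2 by (simp add: power2_eq_square algebra_simps)
    also have "s^2*h^2 + h^2 + B^2*y1*y2 = B*(h^2 - B*g)"
      unfolding B_def g_def by (simp add: power2_eq_square algebra_simps)
    finally have "(s*h*t)^2*y1 + (B*y1*t)^2*y2 + (h*y1)^2*y3
        = P*(T*(s^2*h^2*y1 + B^2*y1^2*y2) + y1^2*y3*B*H)"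
      unfolding H by (simp add: algebra_simps)
    then have "P dvd (s*h*t)^2*y1 + (B*y1*t)^2*y2 + (h*y1)^2*y3" by simp
    moreover have "\<not> P dvd s*h*t" using s(1) nh nt pr by (simp add: prime_dvd_mult_iff)
    moreover have "\<not> P dvd B*y1*t" using nB n1 nt pr by (simp add: prime_dvd_mult_iff)
    moreover have "\<not> P dvd h*y1" using nh n1 pr by (simp add: prime_dvd_mult_iff)
    ultimately have "\<exists>u v w. \<not> P dvd u \<and> \<not> P dvd v \<and> \<not> P dvd w \<and>
        P dvd (u^2*y1 + v^2*y2 + w^2*y3)" by blast
  } note tri = this
  show ?thesis
    using tri pair_lem[OF assms(1), of y1 y2] pair_lem[OF assms(1), of y2 y3]
    unfolding P_def by blast
qed



lemma wzs1: "w \<in> A \<Longrightarrow> (w*a) mod int n = 0 \<Longrightarrow> weighted_zero_sum n A [a]"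
  unfolding weighted_zero_sum_def by (auto intro!: exI[of _ "[w]"])

lemma wzs2: "w1 \<in> A \<Longrightarrow> w2 \<in> A \<Longrightarrow> (w1*a + w2*b) mod int n = 0 \<Longrightarrow> weighted_zero_sum n A [a,b]"
  unfolding weighted_zero_sum_def
  apply (rule conjI, simp)
  apply (rule exI[of _ "[w1,w2]"])
  apply (simp add: numeral_2_eq_2)
  done


lemma wzs3: "w1 \<in> A \<Longrightarrow> w2 \<in> A \<Longrightarrow> w3 \<in> A \<Longrightarrow> (w1*a + w2*b + w3*c) mod int n = 0
   \<Longrightarrow> weighted_zero_sum n A [a,b,c]"
  unfolding weighted_zero_sum_def
  apply (rule conjI, simp)
  apply (rule exI[of _ "[w1,w2,w3]"])
  apply (simp add: numeral_3_eq_3 add.assoc)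
  done

lemma subl: "sublist [y1] [y1,y2,y3]" "sublist [y2] [y1,y2,y3]" "sublist [y3] [y1,y2,y3]"
  "sublist [y1,y2] [y1,y2,y3]" "sublist [y2,y3] [y1,y2,y3]" "sublist [y1,y2,y3] [y1,y2,y3]"
proof -
  show "sublist [y1] [y1,y2,y3]" unfolding sublist_def by (rule exI[of _ "[]"], rule exI[of _ "[y2,y3]"]) simp
  show "sublist [y2] [y1,y2,y3]" unfolding sublist_def by (rule exI[of _ "[y1]"], rule exI[of _ "[y3]"]) simp
  show "sublist [y3] [y1,y2,y3]" unfolding sublist_def by (rule exI[of _ "[y1,y2]"], rule exI[of _ "[]"]) simp
  show "sublist [y1,y2] [y1,y2,y3]" unfolding sublist_def by (rule exI[of _ "[]"], rule exI[of _ "[y3]"]) simp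
  show "sublist [y2,y3] [y1,y2,y3]" unfolding sublist_def by (rule exI[of _ "[y1]"], rule exI[of _ "[]"]) simp
  show "sublist [y1,y2,y3] [y1,y2,y3]" by simp
qed

lemma sub1: "subseq zs [a] \<Longrightarrow> zs = [] \<or> zs = [a]"
  apply (cases zs)
   apply simp
  apply (simp split: if_splits)
  done


lemma sub2: assumes "subseq zs [a,b]" shows "zs = [] \<or> zs = [a] \<or> zs = [b] \<or> zs = [a,b]"
proof (cases zs)
  case Nil then show ?thesis by simp
next
  case (Cons z zs')
  have h: "subseq (z#zs') (a#[b])" using assms Cons by simp
  show ?thesis
  proof (cases "z = a")
    case True
    then have "subseq zs' [b]" using h subseq_Cons2_iff[of z zs' a "[b]"] by presburger
    then have "zs' = [] \<or> zs' = [b]" by (rule sub1)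
    then show ?thesis using Cons True by (elim disjE) simp_all
  next
    case False
    then have "subseq (z#zs') [b]" using h subseq_Cons2_iff[of z zs' a "[b]"] by presburger
    then have "z#zs' = [] \<or> z#zs' = [b]" by (rule sub1)
    then show ?thesis using Cons by simp
  qed
qed

lemma modsum2: "((x1 mod m)*a + (x2 mod m)*b) mod m = (x1*a + x2*b) mod (m::int)"
proof -
  have "[(x1 mod m)*a + (x2 mod m)*b = x1*a + x2*b] (mod m)"
    by (intro cong_add cong_mult cong_refl) (simp_all add: cong_def)
  then show ?thesis by (simp add: cong_def)
qed

lemma modsum3: "((x1 mod m)*a + (x2 mod m)*b + (x3 mod m)*c) mod m = (x1*a + x2*b + x3*c) mod (m::int)"
proof -
  have "[(x1 mod m)*a + (x2 mod m)*b + (x3 mod m)*c = x1*a + x2*b + x3*c] (mod m)"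
    by (intro cong_add cong_mult cong_refl) (simp_all add: cong_def)
  then show ?thesis by (simp add: cong_def)
qed

lemma pk2: "(x::int)^k * x^k = x^(k*2)" by (simp add: mult_2_right power_add)

lemma key_dvd:
  assumes "n = p^(2*k+1) * r" "int p dvd S"
  shows "int n dvd (int r * int p ^ k)^2 * S"
proof -
  obtain M where M: "S = int p * M" using assms(2) by (auto simp: dvd_def)
  have e: "int p ^ (2*k+1) = int p^k * int p^k * int p" by (simp add: mult_2 power_add)
  have "(int r * int p ^ k)^2 * S = int n * (int r * M)"
    unfolding M assms(1) by (simp add: e power2_eq_square algebra_simps pk2)
  then show ?thesis by simp
qed

lemma wt_in:
  assumes "n = p^(2*k+1) * r" "prime p" "\<not> p dvd r" "\<not> int p dvd v" "n > 0"
  shows "(int r * int p ^ k * v)^2 mod int n \<in> sq_set_star n"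
proof -
  define Q where "Q = int r * int p ^ k * v"
  have "Q^2 mod int n \<in> sq_set n"
    unfolding sq_set_def
    by (rule CollectI, rule exI[of _ "Q mod int n"]) (use assms(5) in \<open>simp add: power_mod\<close>)
  moreover have "Q^2 mod int n \<noteq> 0"
  proof
    assume "Q^2 mod int n = 0"
    then have d: "int n dvd Q^2" by (simp add: dvd_eq_mod_eq_0)
    have e1: "Q^2 = (int p^k * int p^k) * (int r * (int r * v^2))"
      unfolding Q_def by (simp add: power2_eq_square algebra_simps)
    have e2: "int n = (int p^k * int p^k) * (int r * int p)"
      unfolding assms(1) by (simp add: mult_2 power_add algebra_simps pk2)
    have "int r * int p dvd int r * (int r * v^2)"
      using d unfolding e1 e2 using assms(2) by (simp add: dvd_mult_cancel_left)
    moreover have "int r \<noteq> 0" using assms(1,5) by auto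
    ultimately have "int p dvd int r * v^2" by (simp add: dvd_mult_cancel_left)
    moreover have pr: "prime (int p)" using assms(2) by simp
    ultimately have "int p dvd int r \<or> int p dvd v" 
      by (auto simp: prime_dvd_mult_iff prime_dvd_power_iff)
    then show False using assms(3,4) by (simp add: int_dvd_int_iff)
  qed
  ultimately show ?thesis unfolding sq_set_star_def Q_def by simp
qed


lemma C3:
  assumes pr: "prime p" and p2: "2 < p" and nd: "n = p^(2*k+1) * r" and nr: "\<not> p dvd r" and n0: "n > 0"
  shows "has_wzs_consec n (sq_set_star n) [y1,y2,y3]"
proof -
  define Q where "Q = int r * int p ^ k"
  define wt where "wt = (\<lambda>v. (Q*v)^2 mod int n)"
  have W: "wt v \<in> sq_set_star n" if "\<not> int p dvd v" for v
    using wt_in[OF nd pr nr that n0] unfolding wt_def Q_def .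
  have "int p > 1" using prime_gt_1_nat[OF pr] by simp
  then have "\<not> int p dvd 1" by (auto dest: zdvd_imp_le)
  then have W1: "wt 1 \<in> sq_set_star n" using W[of 1] by simp
  have E1: "(wt 1 * a) mod int n = 0" if "int p dvd a" for a
  proof -
    have "int n dvd Q^2 * a" using key_dvd[OF nd that] unfolding Q_def .
    then have "(Q^2*a) mod int n = 0" by (rule dvd_imp_mod_0)
    moreover have "(wt 1 * a) mod int n = (Q^2*a) mod int n" unfolding wt_def by (simp add: mod_mult_left_eq)
    ultimately show ?thesis by simp
  qed
  have E2: "(wt v * a + wt w * b) mod int n = 0" if "int p dvd v^2*a + w^2*b" for v w a b
  proof -
    have "int n dvd Q^2 * (v^2*a + w^2*b)" using key_dvd[OF nd that] unfolding Q_def .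
    moreover have "Q^2 * (v^2*a + w^2*b) = (Q*v)^2*a + (Q*w)^2*b" by (simp add: power_mult_distrib algebra_simps)
    ultimately have "int n dvd ((Q*v)^2*a + (Q*w)^2*b)" by simp
    then have "((Q*v)^2*a + (Q*w)^2*b) mod int n = 0" by (rule dvd_imp_mod_0)
    then show ?thesis unfolding wt_def modsum2 .
  qed
  have E3: "(wt u * a + wt v * b + wt w * c) mod int n = 0" if "int p dvd u^2*a + v^2*b + w^2*c" for u v w a b c
  proof -
    have "int n dvd Q^2 * (u^2*a + v^2*b + w^2*c)" using key_dvd[OF nd that] unfolding Q_def .
    moreover have "Q^2 * (u^2*a + v^2*b + w^2*c) = (Q*u)^2*a + (Q*v)^2*b + (Q*w)^2*c"
      by (simp add: power_mult_distrib algebra_simps)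
    ultimately have "int n dvd ((Q*u)^2*a + (Q*v)^2*b + (Q*w)^2*c)" by simp
    then have "((Q*u)^2*a + (Q*v)^2*b + (Q*w)^2*c) mod int n = 0" by (rule dvd_imp_mod_0)
    then show ?thesis unfolding wt_def modsum3 .
  qed
  let ?A = "sq_set_star n"
  have "weighted_zero_sum n ?A [y1] \<or> weighted_zero_sum n ?A [y2] \<or> weighted_zero_sum n ?A [y3] \<or>
     weighted_zero_sum n ?A [y1,y2] \<or> weighted_zero_sum n ?A [y2,y3] \<or> weighted_zero_sum n ?A [y1,y2,y3]"
    using loc3[OF pr p2, of y1 y2 y3]
  proof (elim disjE exE conjE)
    assume "int p dvd y1" then show ?thesis using wzs1[OF W1 E1] by blast
  next
    assume "int p dvd y2" then show ?thesis using wzs1[OF W1 E1] by blast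
  next
    assume "int p dvd y3" then show ?thesis using wzs1[OF W1 E1] by blast
  next
    fix v w assume "\<not> int p dvd v" "\<not> int p dvd w" "int p dvd v^2*y1 + w^2*y2"
    then show ?thesis using wzs2[OF W W E2] by blast
  next
    fix v w assume "\<not> int p dvd v" "\<not> int p dvd w" "int p dvd v^2*y2 + w^2*y3"
    then show ?thesis using wzs2[OF W W E2] by blast
  next
    fix u v w assume "\<not> int p dvd u" "\<not> int p dvd v" "\<not> int p dvd w" "int p dvd u^2*y1 + v^2*y2 + w^2*y3"
    then show ?thesis using wzs3[OF W W W E3] by blast
  qed
  then show ?thesis
  proof (elim disjE)
    assume "weighted_zero_sum n ?A [y1]" then show ?thesis unfolding has_wzs_consec_def using subl(1) by (intro exI[of _ "[y1]"]) simp
  next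
    assume "weighted_zero_sum n ?A [y2]" then show ?thesis unfolding has_wzs_consec_def using subl(2) by (intro exI[of _ "[y2]"]) simp
  next
    assume "weighted_zero_sum n ?A [y3]" then show ?thesis unfolding has_wzs_consec_def using subl(3) by (intro exI[of _ "[y3]"]) simp
  next
    assume "weighted_zero_sum n ?A [y1,y2]" then show ?thesis unfolding has_wzs_consec_def using subl(4) by (intro exI[of _ "[y1,y2]"]) simp
  next
    assume "weighted_zero_sum n ?A [y2,y3]" then show ?thesis unfolding has_wzs_consec_def using subl(5) by (intro exI[of _ "[y2,y3]"]) simp
  next
    assume "weighted_zero_sum n ?A [y1,y2,y3]" then show ?thesis unfolding has_wzs_consec_def using subl(6) by (intro exI[of _ "[y1,y2,y3]"]) simp
  qed
qed



definition MM :: "nat \<Rightarrow> nat" where "MM q = (if q = 2 then 4 else q)"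

lemma mod4: "\<not> [y^2 = 3] (mod (4::int))"
proof
  assume "[y^2 = 3] (mod (4::int))"
  then have h: "y^2 mod 4 = 3" by (simp add: cong_def)
  have "y^2 mod 4 = ((y mod 4)^2) mod 4" by (simp add: power_mod)
  moreover have "y mod 4 \<in> {0,1,2,3}" by auto
  ultimately have "y^2 mod 4 \<in> {0,1}" by (auto simp: power2_eq_square)
  with h show False by simp
qed

lemma MM_pow: "MM q = q ^ (if q = 2 then 2 else 1)"
  unfolding MM_def by simp

lemma cexists:
  assumes "n > 0"
  shows "\<exists>c::int. \<forall>q. prime q \<and> q dvd n \<longrightarrow> \<not> (\<exists>y. [y^2 = c] (mod int (MM q)))"
proof -
  define A where "A = {q. prime q \<and> q dvd n}"
  have "A \<subseteq> {..n}" unfolding A_def using assms by (auto simp: dvd_imp_le)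
  then have fin: "finite A" by (rule finite_subset) simp
  define u where "u = (\<lambda>q. if q = 2 then 3 else nat ((SOME a. \<not> QuadRes (int q) a) mod int q))"
  have cop: "\<forall>i\<in>A. \<forall>j\<in>A. i \<noteq> j \<longrightarrow> coprime (MM i) (MM j)"
  proof (intro ballI impI)
    fix i j assume ij: "i \<in> A" "j \<in> A" "i \<noteq> j"
    then have "coprime i j" unfolding A_def using primes_coprime by blast
    then show "coprime (MM i) (MM j)" unfolding MM_pow by simp
  qed
  obtain x where x: "\<forall>i\<in>A. [x = u i] (mod MM i)" using chinese_remainder_nat[OF fin cop] by blast
  show ?thesis
  proof (rule exI[of _ "int x"], intro allI impI notI)
    fix q assume q: "prime q \<and> q dvd n" and ex: "\<exists>y. [y^2 = int x] (mod int (MM q))"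
    obtain y where y: "[y^2 = int x] (mod int (MM q))" using ex by blast
    have "[x = u q] (mod MM q)" using x q A_def by auto
    then have "[int x = int (u q)] (mod int (MM q))" by (simp add: cong_int_iff)
    with y have y2: "[y^2 = int (u q)] (mod int (MM q))" by (rule cong_trans)
    show False
    proof (cases "q = 2")
      case True
      then show False using y2 mod4[of y] unfolding MM_def u_def by simp
    next
      case False
      define a where "a = (SOME a. \<not> QuadRes (int q) a)"
      have q2: "2 < q" using False q prime_ge_2_nat[of q] by auto
      have "\<exists>a. \<not> QuadRes (int q) a" using nonres_exists[of q] q q2 by blast
      then have na: "\<not> QuadRes (int q) a" unfolding a_def by (rule someI_ex)
      have "int (u q) = a mod int q" unfolding u_def a_def using False q prime_gt_0_nat by simp
      moreover have "[y^2 = int (u q)] (mod int q)" using y2 False unfolding MM_def by simp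
      ultimately have "[y^2 = a mod int q] (mod int q)" by simp
      moreover have "[a mod int q = a] (mod int q)" by (simp add: cong_def)
      ultimately have "[y^2 = a] (mod int q)" by (rule cong_trans)
      then show False using na unfolding QuadRes_def by blast
    qed
  qed
qed

lemma sq_dvd:
  assumes "prime (q::nat)" "q^(2*j) dvd X^2"
  shows "q^j dvd X"
proof (cases "X = 0")
  case True then show ?thesis by simp
next
  case False
  have nu: "\<not> is_unit q" using assms(1) not_prime_unit by blast
  have "2*j \<le> multiplicity q (X^2)"
    using assms(2) power_dvd_iff_le_multiplicity[of "X^2" q] False nu by simp
  also have "multiplicity q (X^2) = 2 * multiplicity q X"
    using prime_elem_multiplicity_power_distrib[of q X 2] assms(1) False by simp
  finally show ?thesis by (intro multiplicity_dvd') simp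
qed

lemma odd_prime_exists:
  assumes "\<not> (\<exists>k::nat. n = k^2)"
  shows "\<exists>p. prime p \<and> odd (multiplicity p n)"
proof (rule ccontr)
  assume "\<not> ?thesis"
  then have "\<forall>p. prime p \<longrightarrow> 2 dvd multiplicity p n" by auto
  then have "is_nth_power 2 n" using is_nth_power_conv_multiplicity_nat[of 2 n] by simp
  then show False using assms unfolding is_nth_power_def by auto
qed


lemma pw2: "((a::nat)^j*b)^2 = a^(2*j)*b^2"
proof -
  have "(a^j)^2 = a^(2*j)" by (metis mult.commute power_mult)
  then show ?thesis by (simp add: power_mult_distrib)
qed

lemma cprop:
  assumes n0: "n > 0" and ev: "even (multiplicity (2::nat) n)"
    and hc: "\<forall>q. prime q \<and> q dvd n \<longrightarrow> \<not> (\<exists>y. [y^2 = c] (mod int (MM q)))"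
    and d: "int n dvd x^2 - c*z^2"
  shows "int n dvd z^2"
proof (rule ccontr)
  assume nd: "\<not> int n dvd z^2"
  define Z where "Z = nat \<bar>z\<bar>"
  define X where "X = nat \<bar>x\<bar>"
  have zZ: "z^2 = int (Z^2)" unfolding Z_def by simp
  have xX: "x^2 = int (X^2)" unfolding X_def by simp
  have ndZ: "\<not> n dvd Z^2"
  proof
    assume "n dvd Z^2"
    then have "int n dvd int (Z^2)" by (simp only: int_dvd_int_iff)
    then show False using nd zZ by simp
  qed
  have Z0: "Z \<noteq> 0"
  proof
    assume "Z = 0"
    then show False using ndZ by simp
  qed
  have "\<exists>q. prime q \<and> \<not> multiplicity q n \<le> multiplicity q (Z^2)"
  proof (rule ccontr)
    assume "\<not> ?thesis"
    then have "n dvd Z^2" using n0 by (intro multiplicity_le_imp_dvd) auto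
    with ndZ show False by simp
  qed
  then obtain q where q: "prime q" "multiplicity q (Z^2) < multiplicity q n" by auto
  have nu: "\<not> is_unit q" using q(1) not_prime_unit by blast
  define j where "j = multiplicity q Z"
  have mz: "multiplicity q (Z^2) = 2*j"
    using prime_elem_multiplicity_power_distrib[of q Z 2] q(1) Z0 unfolding j_def by simp
  obtain Z' where Z': "Z = q^j * Z'" "\<not> q dvd Z'"
    using multiplicity_decompose'[OF Z0 nu] unfolding j_def by blast
  have Mdvd: "MM q * q^(2*j) dvd n"
  proof (cases "q = 2")
    case True
    have evq: "even (multiplicity q n)" using ev True by simp
    have "2*j + 2 \<le> multiplicity q n" using q(2) mz evq by presburger
    then have "q^(2*j+2) dvd n" by (rule multiplicity_dvd')
    moreover have eq: "MM q * q^(2*j) = q^(2*j+2)" using True unfolding MM_def by (simp add: power_add)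
    ultimately show ?thesis by (simp only: eq)
  next
    case False
    have "2*j + 1 \<le> multiplicity q n" using q(2) mz by simp
    then have "q^(2*j+1) dvd n" by (rule multiplicity_dvd')
    moreover have eq: "MM q * q^(2*j) = q^(2*j+1)" using False unfolding MM_def by simp
    ultimately show ?thesis by (simp only: eq)
  qed
  have qn: "q dvd n"
  proof -
    have "q dvd MM q" unfolding MM_def by simp
    then have "q dvd MM q * q^(2*j)" by (rule dvd_mult2)
    then show ?thesis using Mdvd by (rule dvd_trans)
  qed
  have d1: "int (q^(2*j)) * int (MM q) dvd x^2 - c*z^2"
  proof -
    have "int (MM q * q^(2*j)) dvd int n" using Mdvd by (simp only: int_dvd_int_iff)
    then have "int (q^(2*j)) * int (MM q) dvd int n" by (simp add: mult.commute)
    then show ?thesis using d by (rule dvd_trans)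
  qed
  have zq: "z^2 = int (q^(2*j)) * int (Z'^2)" unfolding zZ Z'(1) pw2 by (simp only: of_nat_mult)
  have "int (q^(2*j)) dvd x^2 - c*z^2" using d1 by (rule dvd_mult_left)
  moreover have "int (q^(2*j)) dvd c*z^2" unfolding zq by simp
  ultimately have "int (q^(2*j)) dvd x^2 - c*z^2 + c*z^2" by (rule dvd_add)
  then have "int (q^(2*j)) dvd int (X^2)" using xX by simp
  then have "q^(2*j) dvd X^2" by (simp only: int_dvd_int_iff)
  then have "q^j dvd X" by (rule sq_dvd[OF q(1)])
  then obtain X' where X': "X = q^j * X'" by (auto simp: dvd_def)
  have xq: "x^2 = int (q^(2*j)) * int (X'^2)" unfolding xX X' pw2 by (simp only: of_nat_mult)
  have "x^2 - c*z^2 = int (q^(2*j)) * (int (X'^2) - c * int (Z'^2))"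
    unfolding xq zq by (simp add: algebra_simps)
  with d1 have hh: "int (q^(2*j)) * int (MM q) dvd int (q^(2*j)) * (int (X'^2) - c * int (Z'^2))" by simp
  have nz: "int (q^(2*j)) \<noteq> 0" using q(1) by (simp add: prime_gt_0_nat)
  from hh have "int (q^(2*j)) = 0 \<or> int (MM q) dvd int (X'^2) - c * int (Z'^2)"
    by (simp only: dvd_mult_cancel_left)
  with nz have dM: "int (MM q) dvd int (X'^2) - c * int (Z'^2)" by blast
  have "coprime q Z'" using prime_imp_coprime[OF q(1) Z'(2)] .
  then have "coprime Z' (MM q)" unfolding MM_pow by (simp add: coprime_commute)
  then have "coprime (int Z') (int (MM q))" by simp
  then obtain w where w: "[int Z' * w = 1] (mod int (MM q))" using cong_solve_coprime_int by blast
  define M where "M = int (MM q)"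
  have c1: "[int (X'^2) = c * int (Z'^2)] (mod M)" using dM unfolding M_def by (simp add: cong_iff_dvd_diff)
  have A1: "[(int X' * w)^2 = (c * int (Z'^2)) * w^2] (mod M)"
    using cong_mult[OF c1 cong_refl[of "w^2"]] by (simp add: power_mult_distrib)
  have e: "(c * int (Z'^2)) * w^2 = c * (int Z' * w)^2" by (simp add: power_mult_distrib)
  have C1: "[c * (int Z' * w)^2 = c * 1^2] (mod M)"
    using w unfolding M_def by (intro cong_mult cong_refl cong_pow)
  from A1 have "[(int X' * w)^2 = c * (int Z' * w)^2] (mod M)" unfolding e .
  from cong_trans[OF this C1]
  have "[(int X' * w)^2 = c] (mod M)" by simp
  then show False using hc q(1) qn unfolding M_def by blast
qed



lemma sqsD: "w \<in> sq_set_star n \<Longrightarrow> (\<exists>x. w = x^2 mod int n) \<and> w \<noteq> 0"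
  unfolding sq_set_star_def sq_set_def by auto

lemma wzs1D: "weighted_zero_sum n A [a] \<Longrightarrow> \<exists>w\<in>A. (w*a) mod int n = 0"
proof -
  assume "weighted_zero_sum n A [a]"
  then have "\<exists>as. length as = length [a] \<and> set as \<subseteq> A \<and> (\<Sum>i<length [a]. as ! i * [a] ! i) mod int n = 0"
    unfolding weighted_zero_sum_def by (rule conjunct2)
  then obtain as where as0: "length as = length [a] \<and> set as \<subseteq> A \<and> (\<Sum>i<length [a]. as ! i * [a] ! i) mod int n = 0"
    by (rule exE)
  note as = conjunct1[OF as0] conjunct1[OF conjunct2[OF as0]] conjunct2[OF conjunct2[OF as0]]
  have "\<exists>w. as = [w]" using as(1) by (simp add: length_Suc_conv)
  then obtain w where "as = [w]" by blast
  then show ?thesis using as by (intro bexI[of _ w]) auto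
qed

lemma wzs2D: "weighted_zero_sum n A [a,b] \<Longrightarrow> \<exists>w1\<in>A. \<exists>w2\<in>A. (w1*a + w2*b) mod int n = 0"
proof -
  assume "weighted_zero_sum n A [a,b]"
  then have "\<exists>as. length as = length [a,b] \<and> set as \<subseteq> A \<and> (\<Sum>i<length [a,b]. as ! i * [a,b] ! i) mod int n = 0"
    unfolding weighted_zero_sum_def by (rule conjunct2)
  then obtain as where as0: "length as = length [a,b] \<and> set as \<subseteq> A \<and> (\<Sum>i<length [a,b]. as ! i * [a,b] ! i) mod int n = 0"
    by (rule exE)
  note as = conjunct1[OF as0] conjunct1[OF conjunct2[OF as0]] conjunct2[OF conjunct2[OF as0]]
  have "\<exists>w1 w2. as = [w1,w2]" using as(1) by (auto simp: length_Suc_conv)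
  then obtain w1 w2 where "as = [w1,w2]" by blast
  then show ?thesis using as by (intro bexI[of _ w1] bexI[of _ w2]) (auto simp: numeral_2_eq_2)
qed

lemma lowlist:
  assumes n2: "n \<ge> 2" and P: "\<And>x z. int n dvd x^2 - c*z^2 \<Longrightarrow> int n dvd z^2"
  shows "\<not> has_wzs_subseq n (sq_set_star n) [1, (-c) mod int n]"
proof
  define b where "b = (-c) mod int n"
  assume "has_wzs_subseq n (sq_set_star n) [1, (-c) mod int n]"
  then obtain zs where zs: "subseq zs [1,b]" "zs \<noteq> []" "weighted_zero_sum n (sq_set_star n) zs"
    unfolding has_wzs_subseq_def b_def by auto
  have nz: "w mod int n \<noteq> 0" if wA: "w \<in> sq_set_star n" for w
  proof -
    obtain x where "w = x^2 mod int n" "w \<noteq> 0" using sqsD[OF wA] by auto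
    then show ?thesis by simp
  qed
  have "zs = [1] \<or> zs = [b] \<or> zs = [1,b]" using sub2[OF zs(1)] zs(2) by auto
  then show False
  proof (elim disjE)
    assume "zs = [1]"
    then have "weighted_zero_sum n (sq_set_star n) [1]" using zs(3) by simp
    from wzs1D[OF this] obtain w where "w \<in> sq_set_star n" "(w*1) mod int n = 0" by (rule bexE)
    then show False using nz by simp
  next
    assume "zs = [b]"
    then have "weighted_zero_sum n (sq_set_star n) [b]" using zs(3) by simp
    from wzs1D[OF this] obtain w where w: "w \<in> sq_set_star n" "(w*b) mod int n = 0" by (rule bexE)
    obtain x where x: "w = x^2 mod int n" using sqsD[OF w(1)] by auto
    have "[w*b = x^2 * (-c)] (mod int n)" unfolding x b_def by (intro cong_mult) (simp_all add: cong_def)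
    then have "[x^2 * (-c) = 0] (mod int n)" using w(2) by (simp add: cong_def)
    then have "int n dvd 0^2 - c*x^2" by (simp add: cong_0_iff mult.commute)
    then have "int n dvd x^2" by (rule P)
    then have "w = 0" unfolding x by simp
    then show False using sqsD[OF w(1)] by simp
  next
    assume "zs = [1,b]"
    then have "weighted_zero_sum n (sq_set_star n) [1,b]" using zs(3) by simp
    from wzs2D[OF this] obtain w1 w2 where w: "w1 \<in> sq_set_star n" "w2 \<in> sq_set_star n" "(w1*1 + w2*b) mod int n = 0"
      by (elim bexE)
    obtain x where x: "w1 = x^2 mod int n" using sqsD[OF w(1)] by auto
    obtain z where z: "w2 = z^2 mod int n" using sqsD[OF w(2)] by auto
    have "[w1*1 + w2*b = x^2 - c*z^2] (mod int n)"
    proof -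
      have "[w1*1 + w2*b = x^2*1 + z^2*(-c)] (mod int n)"
        unfolding x z b_def by (intro cong_add cong_mult) (simp_all add: cong_def)
      then show ?thesis by (simp add: algebra_simps)
    qed
    then have "[x^2 - c*z^2 = 0] (mod int n)" using w(3) by (simp add: cong_def)
    then have "int n dvd x^2 - c*z^2" by (simp add: cong_0_iff)
    then have "int n dvd z^2" by (rule P)
    then have "w2 = 0" unfolding z by simp
    then show False using sqsD[OF w(2)] by simp
  qed
qed


lemma consec_subseq: "has_wzs_consec n A ys \<Longrightarrow> has_wzs_subseq n A ys"
  unfolding has_wzs_consec_def has_wzs_subseq_def by (auto intro: sublist_imp_subseq)

theorem mainTheorem12:
  fixes n :: nat
  assumes "\<not> (\<exists>k::nat. n = k ^ 2)"
    and "even (multiplicity (2::nat) n)"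
  shows "D_const (sq_set_star n) n = 3 \<and> C_const (sq_set_star n) n = 3"
proof -
  note ns = assms(1) and ev = assms(2)
  let ?A = "sq_set_star n"
  have n0: "n \<noteq> 0"
  proof
    assume "n = 0" then have "n = 0^2" by simp
    with ns show False by blast
  qed
  have n1: "n \<noteq> 1"
  proof
    assume "n = 1" then have "n = 1^2" by simp
    with ns show False by blast
  qed
  have n2: "n \<ge> 2" using n0 n1 by linarith
  obtain p where p: "prime p" "odd (multiplicity p n)" using odd_prime_exists[OF ns] by blast
  have "p \<noteq> 2" using p(2) ev by auto
  then have p2: "2 < p" using prime_ge_2_nat[OF p(1)] by linarith
  have nu: "\<not> is_unit p" using p(1) not_prime_unit by blast
  obtain k where k: "multiplicity p n = 2*k+1" using p(2) oddE by blast
  define r where "r = n div p^(2*k+1)"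
  have "p^(2*k+1) dvd n" using multiplicity_dvd[of p n] k by simp
  then have nd: "n = p^(2*k+1) * r" unfolding r_def by simp
  have nr: "\<not> p dvd r" unfolding r_def using multiplicity_decompose[OF n0 nu] k by simp
  have UB: "has_wzs_consec n ?A ys" if "length ys = 3" for ys
  proof -
    have "\<exists>y1 y2 y3. ys = [y1,y2,y3]" using that by (auto simp: numeral_3_eq_3 length_Suc_conv)
    then obtain y1 y2 y3 where "ys = [y1,y2,y3]" by blast
    then show ?thesis using C3[OF p(1) p2 nd nr] n0 by simp
  qed
  obtain c :: int where c: "\<forall>q. prime q \<and> q dvd n \<longrightarrow> \<not> (\<exists>y. [y^2 = c] (mod int (MM q)))"
    using cexists n0 by blast
  have P: "int n dvd z^2" if "int n dvd x^2 - c*z^2" for x z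
    using cprop[of n c x z] n0 ev c that by simp
  define b where "b = (-c) mod int n"
  have LB2: "\<not> has_wzs_subseq n ?A [1,b]" using lowlist[of n c, OF n2 P] unfolding b_def by simp
  have LB1: "\<not> has_wzs_subseq n ?A [1]"
  proof
    assume "has_wzs_subseq n ?A [1]"
    then obtain zs where zs: "subseq zs [1]" "zs \<noteq> []" "weighted_zero_sum n ?A zs"
      unfolding has_wzs_subseq_def by blast
    have "subseq [1] [1,b]" by simp
    with zs(1) have "subseq zs [1,b]" by (rule subseq_order.trans)
    then have "has_wzs_subseq n ?A [1,b]" using zs(2,3) unfolding has_wzs_subseq_def by blast
    with LB2 show False by simp
  qed
  have s1: "set [1] \<subseteq> {0..<int n}" using n2 by auto
  have s2: "set [1,b] \<subseteq> {0..<int n}" using n2 unfolding b_def by auto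
  have D: "D_const ?A n = 3"
    unfolding D_const_def
  proof (rule Least_equality)
    show "3 > (0::nat) \<and> (\<forall>ys. length ys = 3 \<and> set ys \<subseteq> {0..<int n} \<longrightarrow> has_wzs_subseq n ?A ys)"
      using UB consec_subseq by auto
  next
    fix t assume t: "t > 0 \<and> (\<forall>ys. length ys = t \<and> set ys \<subseteq> {0..<int n} \<longrightarrow> has_wzs_subseq n ?A ys)"
    show "3 \<le> t"
    proof (rule ccontr)
      assume "\<not> 3 \<le> t"
      then have "t = 1 \<or> t = 2" using t by linarith
      then show False
      proof
        assume "t = 1" then show False using t s1 LB1 by auto
      next
        assume "t = 2" then show False using t s2 LB2 by auto
      qed
    qed
  qed
  have C: "C_const ?A n = 3"
    unfolding C_const_def
  proof (rule Least_equality)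
    show "3 > (0::nat) \<and> (\<forall>ys. length ys = 3 \<and> set ys \<subseteq> {0..<int n} \<longrightarrow> has_wzs_consec n ?A ys)"
      using UB by auto
  next
    fix t assume t: "t > 0 \<and> (\<forall>ys. length ys = t \<and> set ys \<subseteq> {0..<int n} \<longrightarrow> has_wzs_consec n ?A ys)"
    show "3 \<le> t"
    proof (rule ccontr)
      assume "\<not> 3 \<le> t"
      then have "t = 1 \<or> t = 2" using t by linarith
      then show False
      proof
        assume "t = 1" then show False using t s1 LB1 consec_subseq by fastforce
      next
        assume "t = 2" then show False using t s2 LB2 consec_subseq by fastforce
      qed
    qed
  qed
  show ?thesis using D C by simp
qed

end
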